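(* Let $X \subseteq 2^\omega$ be nice. Then for every Borel function $x \mapsto Y^x$ from $2^\omega$ to $[\omega]^\omega$ there exists a set $Y = \{u_n : n \in \omega\} \subseteq \omega$ such that (1) $u_{n+1} \geq u_n + 2$ for all $n$, and (2) for every $x \in X$, the set $Y \cap Y^x$ is infinite.
   Context: $[\omega]^\omega$ denotes the set of infinite subsets of $\omega$, viewed as a subspace of $2^\omega$. A set $X \subseteq 2^\omega$ is nice if for every Borel function $x \mapsto f^x$ from $2^\omega$ to $\omega^\omega$ there exists $g \in \omega^\omega$ such that for every $x \in X$ there are infinitely many $n$ with $f^x(n) = g(n)$. *)

theory Defs
  imports "HOL-Analysis.Analysis"
begin

text \<open>Cantor space 2^omega is the type nat \<Rightarrow> bool and Baire space omega^omega is
nat \<Rightarrow> nat, both with the product topology (Function_Topology) and their Borel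
sigma-algebras.\<close>

definition nice :: "(nat \<Rightarrow> bool) set \<Rightarrow> bool" where
  "nice X \<longleftrightarrow>
     (\<forall>f :: (nat \<Rightarrow> bool) \<Rightarrow> (nat \<Rightarrow> nat). f \<in> borel \<rightarrow>\<^sub>M borel \<longrightarrow>
        (\<exists>g :: nat \<Rightarrow> nat. \<forall>x\<in>X. infinite {n. f x n = g n}))"

end

theory Submission
  imports Defs "HOL-Library.Nat_Bijection"
begin

definition mY :: "(nat \<Rightarrow> bool) \<Rightarrow> nat \<Rightarrow> nat" where
  "mY Y n = (LEAST k. 3*n+1 \<le> card {i. n \<le> i \<and> i < k \<and> Y i})"
definition cdk :: "nat \<Rightarrow> (nat \<Rightarrow> bool) \<Rightarrow> nat" where
  "cdk k Y = (\<Sum>i<k. if Y i then 2^i else 0)"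
definition code :: "(nat \<Rightarrow> bool) \<Rightarrow> nat \<Rightarrow> nat" where
  "code Y n = cdk (mY Y n) Y"

lemma meas_coord[measurable]: "(\<lambda>Y::nat\<Rightarrow>bool. Y i) \<in> measurable borel (count_space UNIV)"
proof -
  have "(\<lambda>Y::nat\<Rightarrow>bool. Y i) \<in> measurable borel borel" by (rule measurable_product_coordinates)
  moreover have "measurable (borel::(nat\<Rightarrow>bool) measure) (borel::bool measure) = measurable borel (count_space UNIV)"
    by (rule measurable_cong_sets[OF refl sets_borel_eq_count_space])
  ultimately show ?thesis by simp
qed

lemma meas_cdk: "cdk k \<in> measurable borel (count_space UNIV)"
  unfolding cdk_def by measurable

lemma meas_mY: "(\<lambda>Y. mY Y n) \<in> measurable borel (count_space UNIV)"
  unfolding mY_def by measurable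

lemma meas_code: "(\<lambda>Y. code Y n) \<in> measurable borel (count_space UNIV)"
  unfolding code_def
  by (rule measurable_compose_countable[where f=cdk, OF _ meas_mY]) (rule meas_cdk[unfolded ])

lemma meas_f:
  assumes "Yx \<in> borel \<rightarrow>\<^sub>M borel"
  shows "(\<lambda>x. code (Yx x)) \<in> borel \<rightarrow>\<^sub>M (borel :: (nat \<Rightarrow> nat) measure)"
proof (rule measurable_coordinatewise_then_product)
  fix n
  have "(\<lambda>x. code (Yx x) n) \<in> borel \<rightarrow>\<^sub>M count_space UNIV"
    using measurable_comp[OF assms meas_code[of n]] by (simp add: o_def)
  then show "(\<lambda>x. code (Yx x) n) \<in> borel_measurable borel"
    by (simp add: measurable_cong_sets[OF refl sets_borel_eq_count_space])
qed

lemma cdk_eq: "cdk k Y = set_encode {i. i<k \<and> Y i}"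
proof -
  have "{i. i<k \<and> Y i} = {i\<in>{..<k}. Y i}" by auto
  then show ?thesis unfolding cdk_def set_encode_def
    by (simp only: sum.inter_filter[OF finite_lessThan])
qed

lemma code_decode: "set_decode (code Y n) = {i. i < mY Y n \<and> Y i}"
  unfolding code_def cdk_eq by simp

lemma code_prop:
  assumes "infinite {i. Y i}"
  shows "3*n+1 \<le> card {a \<in> set_decode (code Y n). n \<le> a \<and> Y a}"
proof -
  have "infinite {i. n \<le> i \<and> Y i}"
  proof
    assume "finite {i. n \<le> i \<and> Y i}"
    then have "finite ({..<n} \<union> {i. n \<le> i \<and> Y i})" by simp
    moreover have "{i. Y i} \<subseteq> {..<n} \<union> {i. n \<le> i \<and> Y i}" by auto
    ultimately show False using assms finite_subset by blast
  qed
  then obtain B where B: "finite B" "card B = 3*n+1" "B \<subseteq> {i. n \<le> i \<and> Y i}"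
    using infinite_arbitrarily_large by blast
  have "B \<noteq> {}" using B by auto
  define k where "k = Suc (Max B)"
  have "B \<subseteq> {i. n \<le> i \<and> i < k \<and> Y i}"
    using B Max_ge[OF B(1)] unfolding k_def by (auto simp: less_Suc_eq_le)
  then have "3*n+1 \<le> card {i. n \<le> i \<and> i < k \<and> Y i}"
    using B(2) by (metis card_mono finite_Collect_conjI finite_Collect_less_nat finite_Collect_conjI[of "\<lambda>i. i < k"] conj_commute)
  then have "3*n+1 \<le> card {i. n \<le> i \<and> i < mY Y n \<and> Y i}"
    unfolding mY_def by (rule LeastI)
  moreover have "{a \<in> set_decode (code Y n). n \<le> a \<and> Y a} = {i. n \<le> i \<and> i < mY Y n \<and> Y i}"
    unfolding code_decode by auto
  ultimately show ?thesis by simp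
qed

lemma code_sub: "a \<in> set_decode (code Y n) \<Longrightarrow> Y a"
  unfolding code_decode by auto

definition blocked :: "nat set \<Rightarrow> nat \<Rightarrow> bool" where
  "blocked F a \<longleftrightarrow> (\<exists>b\<in>F. a = b \<or> a = Suc b \<or> b = Suc a)"

fun Fs :: "(nat \<Rightarrow> nat) \<Rightarrow> nat \<Rightarrow> nat set" where
  "Fs g 0 = {}"
| "Fs g (Suc n) = (let C = {a \<in> set_decode (g n). n \<le> a \<and> \<not> blocked (Fs g n) a}
      in if C = {} then Fs g n else insert (Min C) (Fs g n))"

lemma Fs_card: "finite (Fs g n) \<and> card (Fs g n) \<le> n"
proof (induction n)
  case 0 then show ?case by simp
next
  case (Suc n) then show ?case
    by (auto simp: Let_def card_insert_if)
qed

lemma Fs_Suc_mono: "Fs g n \<subseteq> Fs g (Suc n)"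
  by (auto simp: Let_def)

lemma Fs_mono: "m \<le> n \<Longrightarrow> Fs g m \<subseteq> Fs g n"
  using lift_Suc_mono_le[of "Fs g", OF Fs_Suc_mono] by blast

lemma Fs_sep: "a \<in> Fs g n \<Longrightarrow> b \<in> Fs g n \<Longrightarrow> b \<noteq> Suc a"
proof (induction n arbitrary: a b)
  case 0 then show ?case by simp
next
  case (Suc n)
  define C where "C = {a \<in> set_decode (g n). n \<le> a \<and> \<not> blocked (Fs g n) a}"
  show ?case
  proof (cases "C = {}")
    case True
    then show ?thesis using Suc by (simp add: C_def[symmetric] Let_def)
  next
    case False
    have fin: "finite C" unfolding C_def by simp
    have "Min C \<in> C" using Min_in[OF fin False] .
    then have nb: "\<not> blocked (Fs g n) (Min C)" unfolding C_def by simp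
    have "a \<in> insert (Min C) (Fs g n)" "b \<in> insert (Min C) (Fs g n)"
      using Suc.prems False by (simp_all add: C_def[symmetric] Let_def)
    then show ?thesis using Suc.IH nb unfolding blocked_def by auto
  qed
qed

lemma exists_unblocked:
  assumes "finite F" "card F \<le> n" "finite D" "3*n+1 \<le> card D"
  shows "\<exists>a\<in>D. \<not> blocked F a"
proof (rule ccontr)
  assume "\<not> ?thesis"
  then have "D \<subseteq> F \<union> Suc ` F \<union> (\<lambda>b. b - 1) ` F"
    unfolding blocked_def by force
  then have "card D \<le> card (F \<union> Suc ` F \<union> (\<lambda>b. b - 1) ` F)"
    using assms(1) by (intro card_mono) auto
  also have "\<dots> \<le> card F + card (Suc ` F) + card ((\<lambda>b. b - 1) ` F)"
    by (meson card_Un_le add_right_mono order_trans)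
  also have "\<dots> \<le> 3 * n"
    using card_image_le[OF assms(1), of Suc] card_image_le[OF assms(1), of "\<lambda>b. b - 1"] assms(2)
    by linarith
  finally show False using assms(4) by simp
qed

lemma Fs_hit:
  assumes "infinite {i. Y i}" "g n = code Y n"
  shows "\<exists>c\<in>Fs g (Suc n). n \<le> c \<and> Y c"
proof -
  define C where "C = {a \<in> set_decode (g n). n \<le> a \<and> \<not> blocked (Fs g n) a}"
  obtain a where a: "a \<in> {a \<in> set_decode (code Y n). n \<le> a \<and> Y a}" "\<not> blocked (Fs g n) a"
    using exists_unblocked[OF conjunct1[OF Fs_card] conjunct2[OF Fs_card] _ code_prop[OF assms(1)]]
    by auto
  then have "a \<in> C" unfolding C_def using assms(2) by auto
  then have ne: "C \<noteq> {}" by auto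
  have fin: "finite C" unfolding C_def by simp
  have m: "Min C \<in> C" using Min_in[OF fin ne] .
  then have "Min C \<in> set_decode (code Y n)" "n \<le> Min C" unfolding C_def using assms(2) by auto
  then have "Y (Min C)" "n \<le> Min C" using code_sub by auto
  moreover have "Min C \<in> Fs g (Suc n)" using ne by (simp add: C_def[symmetric] Let_def)
  ultimately show ?thesis by blast
qed

theorem lemma2p7:
  fixes X :: "(nat \<Rightarrow> bool) set"
    and Yx :: "(nat \<Rightarrow> bool) \<Rightarrow> (nat \<Rightarrow> bool)"
  assumes "nice X"
    and "Yx \<in> borel \<rightarrow>\<^sub>M borel"
    and "\<forall>x. infinite {n. Yx x n}"
  shows "\<exists>u :: nat \<Rightarrow> nat. (\<forall>n. u (Suc n) \<ge> u n + 2) \<and>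
           (\<forall>x\<in>X. infinite (range u \<inter> {n. Yx x n}))"
proof (cases "X = {}")
  case True
  show ?thesis by (rule exI[of _ "\<lambda>n. 2*n"]) (simp add: True)
next
  case False
  obtain g where g: "\<forall>x\<in>X. infinite {n. code (Yx x) n = g n}"
  proof -
    have "\<exists>g :: nat \<Rightarrow> nat. \<forall>x\<in>X. infinite {n. code (Yx x) n = g n}"
    proof -
      have N: "\<forall>f :: (nat \<Rightarrow> bool) \<Rightarrow> (nat \<Rightarrow> nat). f \<in> borel \<rightarrow>\<^sub>M borel \<longrightarrow>
        (\<exists>g :: nat \<Rightarrow> nat. \<forall>x\<in>X. infinite {n. f x n = g n})"
        using assms(1) unfolding nice_def .
      show ?thesis using N[rule_format, OF meas_f[OF assms(2)]] .
    qed
    then obtain g0 :: "nat \<Rightarrow> nat" where "\<forall>x\<in>X. infinite {n. code (Yx x) n = g0 n}" by (rule exE)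
    then show ?thesis by (rule that)
  qed
  define S where "S = (\<Union>n. Fs g n)"
  have hit: "infinite (S \<inter> {n. Yx x n})" if xX: "x \<in> X" for x
    unfolding infinite_nat_iff_unbounded_le
  proof
    fix m
    obtain n where n: "n \<ge> m" "code (Yx x) n = g n"
    proof -
      have "infinite {n. code (Yx x) n = g n}" using g xX by blast
      then have "\<exists>n\<ge>m. n \<in> {n. code (Yx x) n = g n}" unfolding infinite_nat_iff_unbounded_le by blast
      then obtain n0 where "n0 \<ge> m" "code (Yx x) n0 = g n0" by blast
      then show ?thesis by (rule that)
    qed
    obtain c where "c \<in> Fs g (Suc n)" "n \<le> c" "Yx x c"
      using Fs_hit[of "Yx x" g n, OF spec[OF assms(3)] n(2)[symmetric]] by blast
    then show "\<exists>c\<ge>m. c \<in> S \<inter> {n. Yx x n}" using n(1) unfolding S_def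
      by (intro exI[of _ c] conjI) (simp, blast)
  qed
  obtain x0 where "x0 \<in> X" using False by blast
  then have "infinite (S \<inter> {n. Yx x0 n})" by (rule hit)
  then have infS: "infinite S" by (rule infinite_super[rotated]) blast
  have sep: "b \<noteq> Suc a" if ab: "a \<in> S" "b \<in> S" for a b
  proof -
    obtain i j where "a \<in> Fs g i" "b \<in> Fs g j" using ab unfolding S_def by blast
    then have "a \<in> Fs g (max i j)" "b \<in> Fs g (max i j)" using Fs_mono[of i "max i j" g] Fs_mono[of j "max i j" g] by (simp_all add: subset_iff)
    then show ?thesis by (rule Fs_sep)
  qed
  define u where "u = enumerate S"
  have ru: "range u = S" unfolding u_def using bij_enumerate[OF infS] by (simp add: bij_betw_def)
  have "u (Suc n) \<ge> u n + 2" for n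
  proof -
    have "u n < u (Suc n)" unfolding u_def by (rule enumerate_step[OF infS])
    moreover have "u (Suc n) \<noteq> Suc (u n)" using sep ru by auto
    ultimately show ?thesis by simp
  qed
  then show ?thesis using hit ru by blast
qed

end
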